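(* Let $L$ be a finite-dimensional simple Lie algebra over a field $F$ such that every proper subalgebra of $L$ is triangulable on $L$. Then: (1) if $M$ is a maximal subalgebra of $L$, then either $M$ is abelian and no non-zero element of $M$ acts nilpotently on $L$, or $\mathrm{nil}(M)$ is a non-zero maximal nil subalgebra of $L$; (2) if $K$ is a non-zero maximal nil subalgebra of $L$, then the normalizer $N_L(K)$ of $K$ in $L$ is a maximal subalgebra of $L$; (3) for any two different maximal subalgebras $M_1,M_2$ of $L$, no non-zero element of $M_1\cap M_2$ acts nilpotently on $L$ (in particular, $M_1\cap M_2$ is abelian); (4) $L$ is two-generated.
   Context: A subalgebra $S$ of $L$ is triangulable on $L$ if $\mathrm{ad}_L S=\{\mathrm{ad}_L x\mid x\in S\}$ is a Lie algebra of linear transformations of $L$ which is simultaneously triangulable over the algebraic closure of $F$ (equivalently, every element of $S^2$ acts nilpotently on $L$). An element $x$ acts nilpotently on $L$ if $\mathrm{ad}_L x$ is nilpotent. A subalgebra is nil on $L$ if all its elements act nilpotently on $L$; a maximal nil subalgebra is a subalgebra nil on $L$ which is maximal (under inclusion) among subalgebras nil on $L$. For a subalgebra $S$, $\mathrm{nil}(S)$ is the unique maximal ideal of $S$ consisting of elements acting nilpotently on $L$. A Lie algebra is two-generated if it is generated as a Lie algebra by two of its elements. *)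

theory Defs
  imports Main "HOL.Vector_Spaces"
begin

text \<open>A Lie algebra L is modelled as the whole type 'v, a vector space over the
field 'f (scalar multiplication scale), with Lie bracket br.\<close>

definition lie_algebra :: "('f::field \<Rightarrow> 'v::ab_group_add \<Rightarrow> 'v) \<Rightarrow> ('v \<Rightarrow> 'v \<Rightarrow> 'v) \<Rightarrow> bool" where
  "lie_algebra scale br \<longleftrightarrow> vector_space scale
     \<and> (\<forall>x y z. br (x + y) z = br x z + br y z)
     \<and> (\<forall>x y z. br x (y + z) = br x y + br x z)
     \<and> (\<forall>c x y. br (scale c x) y = scale c (br x y))
     \<and> (\<forall>c x y. br x (scale c y) = scale c (br x y))
     \<and> (\<forall>x. br x x = 0)
     \<and> (\<forall>x y z. br x (br y z) + br y (br z x) + br z (br x y) = 0)"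

definition fin_dim :: "('f::field \<Rightarrow> 'v::ab_group_add \<Rightarrow> 'v) \<Rightarrow> bool" where
  "fin_dim scale \<longleftrightarrow> (\<exists>B. finite B \<and> module.span scale B = UNIV)"

definition lie_subalgebra :: "('f::field \<Rightarrow> 'v::ab_group_add \<Rightarrow> 'v) \<Rightarrow> ('v \<Rightarrow> 'v \<Rightarrow> 'v) \<Rightarrow> 'v set \<Rightarrow> bool" where
  "lie_subalgebra scale br S \<longleftrightarrow> module.subspace scale S \<and> (\<forall>x\<in>S. \<forall>y\<in>S. br x y \<in> S)"

definition lie_ideal :: "('f::field \<Rightarrow> 'v::ab_group_add \<Rightarrow> 'v) \<Rightarrow> ('v \<Rightarrow> 'v \<Rightarrow> 'v) \<Rightarrow> 'v set \<Rightarrow> 'v set \<Rightarrow> bool" where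
  "lie_ideal scale br S I \<longleftrightarrow> I \<subseteq> S \<and> module.subspace scale I \<and> (\<forall>x\<in>S. \<forall>y\<in>I. br x y \<in> I)"

definition simple_lie :: "('f::field \<Rightarrow> 'v::ab_group_add \<Rightarrow> 'v) \<Rightarrow> ('v \<Rightarrow> 'v \<Rightarrow> 'v) \<Rightarrow> bool" where
  "simple_lie scale br \<longleftrightarrow> (\<exists>x y. br x y \<noteq> 0)
     \<and> (\<forall>I. lie_ideal scale br UNIV I \<longrightarrow> I = {0} \<or> I = UNIV)"

definition abelian :: "('v::ab_group_add \<Rightarrow> 'v \<Rightarrow> 'v) \<Rightarrow> 'v set \<Rightarrow> bool" where
  "abelian br S \<longleftrightarrow> (\<forall>x\<in>S. \<forall>y\<in>S. br x y = 0)"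

definition acts_nilp :: "('v::ab_group_add \<Rightarrow> 'v \<Rightarrow> 'v) \<Rightarrow> 'v \<Rightarrow> bool" where
  "acts_nilp br x \<longleftrightarrow> (\<exists>n. \<forall>y. (br x ^^ n) y = 0)"

definition nil_on :: "('v::ab_group_add \<Rightarrow> 'v \<Rightarrow> 'v) \<Rightarrow> 'v set \<Rightarrow> bool" where
  "nil_on br S \<longleftrightarrow> (\<forall>x\<in>S. acts_nilp br x)"

definition derived :: "('f::field \<Rightarrow> 'v::ab_group_add \<Rightarrow> 'v) \<Rightarrow> ('v \<Rightarrow> 'v \<Rightarrow> 'v) \<Rightarrow> 'v set \<Rightarrow> 'v set" where
  "derived scale br S = module.span scale {br x y | x y. x \<in> S \<and> y \<in> S}"

definition triangulable :: "('f::field \<Rightarrow> 'v::ab_group_add \<Rightarrow> 'v) \<Rightarrow> ('v \<Rightarrow> 'v \<Rightarrow> 'v) \<Rightarrow> 'v set \<Rightarrow> bool" where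
  "triangulable scale br S \<longleftrightarrow> (\<forall>x\<in>derived scale br S. acts_nilp br x)"

definition maximal_subalgebra :: "('f::field \<Rightarrow> 'v::ab_group_add \<Rightarrow> 'v) \<Rightarrow> ('v \<Rightarrow> 'v \<Rightarrow> 'v) \<Rightarrow> 'v set \<Rightarrow> bool" where
  "maximal_subalgebra scale br M \<longleftrightarrow> lie_subalgebra scale br M \<and> M \<noteq> UNIV
     \<and> (\<forall>N. lie_subalgebra scale br N \<and> M \<subseteq> N \<longrightarrow> N = M \<or> N = UNIV)"

definition maximal_nil_subalgebra :: "('f::field \<Rightarrow> 'v::ab_group_add \<Rightarrow> 'v) \<Rightarrow> ('v \<Rightarrow> 'v \<Rightarrow> 'v) \<Rightarrow> 'v set \<Rightarrow> bool" where
  "maximal_nil_subalgebra scale br K \<longleftrightarrow> lie_subalgebra scale br K \<and> nil_on br K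
     \<and> (\<forall>N. lie_subalgebra scale br N \<and> nil_on br N \<and> K \<subseteq> N \<longrightarrow> N = K)"

definition nil_rad :: "('f::field \<Rightarrow> 'v::ab_group_add \<Rightarrow> 'v) \<Rightarrow> ('v \<Rightarrow> 'v \<Rightarrow> 'v) \<Rightarrow> 'v set \<Rightarrow> 'v set" where
  "nil_rad scale br S = (THE I. lie_ideal scale br S I \<and> nil_on br I
     \<and> (\<forall>J. lie_ideal scale br S J \<and> nil_on br J \<longrightarrow> J \<subseteq> I))"

definition normalizer :: "('v::ab_group_add \<Rightarrow> 'v \<Rightarrow> 'v) \<Rightarrow> 'v set \<Rightarrow> 'v set" where
  "normalizer br K = {x. \<forall>k\<in>K. br x k \<in> K}"

definition gen_subalgebra :: "('f::field \<Rightarrow> 'v::ab_group_add \<Rightarrow> 'v) \<Rightarrow> ('v \<Rightarrow> 'v \<Rightarrow> 'v) \<Rightarrow> 'v set \<Rightarrow> 'v set" where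
  "gen_subalgebra scale br X = \<Inter>{S. lie_subalgebra scale br S \<and> X \<subseteq> S}"

definition two_generated :: "('f::field \<Rightarrow> 'v::ab_group_add \<Rightarrow> 'v) \<Rightarrow> ('v \<Rightarrow> 'v \<Rightarrow> 'v) \<Rightarrow> bool" where
  "two_generated scale br \<longleftrightarrow> (\<exists>a b. gen_subalgebra scale br {a, b} = UNIV)"

end

theory Submission imports Defs begin

lemma greatest_f:
  fixes f :: "'a \<Rightarrow> nat"
  assumes "P k" "\<forall>y. P y \<longrightarrow> f y \<le> b"
  shows "\<exists>x. P x \<and> (\<forall>y. P y \<longrightarrow> f y \<le> f x)"
  using Lattices_Big.ex_has_greatest_nat[of P k f "Suc b"] assms by fastforce

locale LA = finite_dimensional_vector_space scale Basis
  for scale :: "'f::field \<Rightarrow> 'v::ab_group_add \<Rightarrow> 'v" and Basis +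
  fixes br :: "'v \<Rightarrow> 'v \<Rightarrow> 'v"
  assumes add_l: "br (x + y) z = br x z + br y z"
    and add_r: "br x (y + z) = br x y + br x z"
    and scale_l: "br (scale c x) y = scale c (br x y)"
    and scale_r: "br x (scale c y) = scale c (br x y)"
    and alt: "br x x = 0"
    and jac: "br x (br y z) + br y (br z x) + br z (br x y) = 0"
begin

lemma zero_l[simp]: "br 0 y = 0"
  using add_l[of 0 0 y] by simp
lemma zero_r[simp]: "br y 0 = 0"
  using add_r[of y 0 0] by simp
lemma neg_l: "br (- x) y = - br x y"
  using add_l[of x "-x" y] by (simp add: eq_neg_iff_add_eq_0 add.commute)
lemma neg_r: "br y (- x) = - br y x"
  using add_r[of y x "-x"] by (simp add: eq_neg_iff_add_eq_0 add.commute)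
lemma anti: "br x y = - br y x"
proof -
  have "br (x+y) (x+y) = br x x + br x y + (br y x + br y y)" by (simp add: add_l add_r add.assoc)
  hence "br x y + br y x = 0" by (simp add: alt)
  thus ?thesis by (simp add: eq_neg_iff_add_eq_0)
qed
lemma jac2: "br h (br a u) = br (br h a) u + br a (br h u)"
proof -
  have "br h (br a u) + br a (br u h) + br u (br h a) = 0" by (rule jac)
  moreover have "br a (br u h) = - br a (br h u)" by (metis anti neg_r)
  moreover have "br u (br h a) = - br (br h a) u" by (rule anti)
  ultimately show ?thesis by (simp add: algebra_simps eq_neg_iff_add_eq_0)
qed

lemma sub_pre_l: "subspace W \<Longrightarrow> subspace {x. br x u \<in> W}"
  by (rule subspaceI) (auto simp: add_l scale_l subspace_0 subspace_add subspace_scale)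
lemma sub_pre_r: "subspace W \<Longrightarrow> subspace {x. br u x \<in> W}"
  by (rule subspaceI) (auto simp: add_r scale_r subspace_0 subspace_add subspace_scale)

lemma br_span:
  assumes "\<And>x y. x \<in> X \<Longrightarrow> y \<in> Y \<Longrightarrow> br x y \<in> W" "subspace W" "x \<in> span X" "y \<in> span Y"
  shows "br x y \<in> W"
proof -
  have 1: "br x' y \<in> W" if "x' \<in> X" for x'
    using span_induct[OF assms(4), of "\<lambda>y. br x' y \<in> W"] sub_pre_r[OF assms(2), of x'] 
      assms(1) that by auto
  show ?thesis using span_induct[OF assms(3), of "\<lambda>x. br x y \<in> W"] sub_pre_l[OF assms(2), of y] 1
    by auto
qed

lemma acts_nilp_scale: "acts_nilp br x \<Longrightarrow> acts_nilp br (scale c x)"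
proof -
  have e: "(br (scale c x) ^^ n) y = scale (c^n) ((br x ^^ n) y)" for n y
    by (induction n) (auto simp: scale_l scale_r)
  assume "acts_nilp br x"
  then show ?thesis unfolding acts_nilp_def using e by auto
qed

lemma greatest_dim:
  assumes "P X" shows "\<exists>Y. P Y \<and> (\<forall>Z. P Z \<longrightarrow> dim Z \<le> dim Y)"
  using greatest_f[of P X dim dimension] assms dim_subset_UNIV by auto

definition inv :: "'v set \<Rightarrow> 'v set \<Rightarrow> bool" where
  "inv S W \<longleftrightarrow> (\<forall>s\<in>S. \<forall>w\<in>W. br s w \<in> W)"

definition FP :: "'v set \<Rightarrow> bool" where
  "FP S \<longleftrightarrow> (\<forall>W U. subspace W \<longrightarrow> subspace U \<longrightarrow> W \<subset> U \<longrightarrow> inv S U \<longrightarrow> inv S W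
      \<longrightarrow> (\<exists>u\<in>U - W. \<forall>s\<in>S. br s u \<in> W))"

lemma inv_mono: "inv T X \<Longrightarrow> S \<subseteq> T \<Longrightarrow> inv S X"
  unfolding inv_def by blast

lemma nil_step:
  assumes "acts_nilp br a" "\<forall>u\<in>U0. br a u \<in> U0" "u0 \<in> U0" "u0 \<notin> W" "0 \<in> W"
  shows "\<exists>u\<in>U0. u \<notin> W \<and> br a u \<in> W"
proof -
  obtain n where n: "\<forall>y. (br a ^^ n) y = 0" using assms(1) unfolding acts_nilp_def by auto
  have "\<forall>u0. u0 \<in> U0 \<longrightarrow> u0 \<notin> W \<longrightarrow> (br a ^^ m) u0 \<in> W \<longrightarrow> (\<exists>u\<in>U0. u \<notin> W \<and> br a u \<in> W)" for m
  proof (induction m)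
    case 0 then show ?case by auto
  next
    case (Suc m)
    show ?case
    proof (intro allI impI)
      fix u0 assume u0: "u0 \<in> U0" "u0 \<notin> W" "(br a ^^ Suc m) u0 \<in> W"
      show "\<exists>u\<in>U0. u \<notin> W \<and> br a u \<in> W"
      proof (cases "br a u0 \<in> W")
        case True then show ?thesis using u0 by auto
      next
        case False
        have "(br a ^^ m) (br a u0) \<in> W" using u0(3) unfolding funpow_Suc_right by simp
        then show ?thesis using Suc.IH False u0 assms(2) by auto
      qed
    qed
  qed
  then show ?thesis using n[rule_format, of u0] assms by metis
qed

lemma subalg_0: "lie_subalgebra scale br S \<Longrightarrow> 0 \<in> S"
  unfolding lie_subalgebra_def by (simp add: subspace_0)

lemma span_sub[simp]: "subspace S \<Longrightarrow> span S = S" by simp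

lemma engel: "lie_subalgebra scale br K \<Longrightarrow> nil_on br K \<Longrightarrow> FP K"
proof (induction "dim K" arbitrary: K rule: less_induct)
  case less
  have Ks: "subspace K" and Kc: "\<And>x y. x\<in>K \<Longrightarrow> y\<in>K \<Longrightarrow> br x y \<in> K"
    using less.prems unfolding lie_subalgebra_def by auto
  show ?case unfolding FP_def
  proof (intro allI impI)
    fix W U assume W: "subspace W" and U: "subspace U" and WU: "W \<subset> U"
      and iU: "inv K U" and iW: "inv K W"
    show "\<exists>u\<in>U - W. \<forall>s\<in>K. br s u \<in> W"
    proof (cases "K = {0}")
      case True
      obtain u where "u \<in> U - W" using WU by auto
      then show ?thesis using True W by (auto simp: subspace_0)
    next
      case False
      let ?P = "\<lambda>H. lie_subalgebra scale br H \<and> H \<subset> K"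
      have "lie_subalgebra scale br {0}" unfolding lie_subalgebra_def by simp
      moreover have "{0} \<subset> K" using False subalg_0[OF less.prems(1)] by blast
      ultimately have "?P {0}" by (rule conjI)
      from greatest_dim[of ?P, OF this] obtain H where PH: "?P H" and Hmax: "\<forall>Z. ?P Z \<longrightarrow> dim Z \<le> dim H"
        by blast
      have Hs: "subspace H" and Hc: "\<And>x y. x\<in>H \<Longrightarrow> y\<in>H \<Longrightarrow> br x y \<in> H"
        using PH unfolding lie_subalgebra_def by auto
      have "dim H < dim K" using dim_psubset[of H K] PH Hs Ks by simp
      moreover have "nil_on br H" using less.prems(2) PH unfolding nil_on_def by auto
      ultimately have FPH: "FP H" using less.hyps PH by blast
      have "inv H K" "inv H H" using PH Kc Hc unfolding inv_def by auto
      then obtain a where a: "a \<in> K" "a \<notin> H" "\<forall>h\<in>H. br h a \<in> H"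
        using FPH[unfolded FP_def, rule_format, of H K] Hs Ks PH by blast
      let ?H' = "span (insert a H)"
      have H'c: "br x y \<in> ?H'" if "x \<in> ?H'" "y \<in> ?H'" for x y
      proof (rule br_span[OF _ subspace_span that])
        fix x y assume "x \<in> insert a H" "y \<in> insert a H"
        have "br x y \<in> H \<or> br x y = 0"
        proof (cases "x = a")
          case True
          show ?thesis
          proof (cases "y = a")
            case True then show ?thesis using \<open>x = a\<close> alt by simp
          next
            case False
            then have "y \<in> H" using \<open>y \<in> insert a H\<close> by simp
            then have "br y a \<in> H" using a(3) by simp
            then have "br a y \<in> H" using anti[of a y] subspace_neg[OF Hs] by simp
            then show ?thesis using \<open>x = a\<close> by simp
          qed
        next
          case False
          then have x: "x \<in> H" using \<open>x \<in> insert a H\<close> by simp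
          show ?thesis
          proof (cases "y = a")
            case True then show ?thesis using x a(3) by simp
          next
            case False
            then have "y \<in> H" using \<open>y \<in> insert a H\<close> by simp
            then show ?thesis using x Hc by simp
          qed
        qed
        then show "br x y \<in> ?H'"
          by (metis span_base span_zero insertI2)
      qed
      have H'sub: "lie_subalgebra scale br ?H'" unfolding lie_subalgebra_def using H'c by auto
      have H'K: "?H' \<subseteq> K" using span_minimal[of "insert a H" K] a PH Ks by auto
      have HH': "H \<subset> ?H'" using a span_superset[of "insert a H"] by auto
      have KH': "K = ?H'"
      proof (rule ccontr)
        assume "K \<noteq> ?H'"
        then have "?P ?H'" using H'sub H'K by auto
        moreover have "dim H < dim ?H'" using dim_psubset[of H ?H'] HH' Hs by simp
        ultimately show False using Hmax by fastforce
      qed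
      define U0 where "U0 = {u\<in>U. \<forall>h\<in>H. br h u \<in> W}"
      have "inv H U" "inv H W" using iU iW PH unfolding inv_def by auto
      then obtain u1 where u1: "u1 \<in> U - W" "\<forall>h\<in>H. br h u1 \<in> W"
        using FPH[unfolded FP_def, rule_format, of W U] W U WU by blast
      have u1U0: "u1 \<in> U0" using u1 unfolding U0_def by auto
      have aU0: "br a u \<in> U0" if "u \<in> U0" for u
      proof -
        have "br a u \<in> U" using iU a that unfolding inv_def U0_def by auto
        moreover have "br h (br a u) \<in> W" if "h \<in> H" for h
        proof -
          have "br (br h a) u \<in> W" using a(3) that \<open>u\<in>U0\<close> unfolding U0_def by auto
          moreover have "br a (br h u) \<in> W" using iW a(1) that \<open>u\<in>U0\<close> unfolding U0_def inv_def by auto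
          ultimately show ?thesis using jac2[of h a u] subspace_add[OF W] by simp
        qed
        ultimately show ?thesis unfolding U0_def by auto
      qed
      have "acts_nilp br a" using less.prems(2) a unfolding nil_on_def by auto
      then obtain u where u: "u \<in> U0" "u \<notin> W" "br a u \<in> W"
        using nil_step[of a U0 u1 W] aU0 u1U0 u1 subspace_0[OF W] by blast
      have "br k u \<in> W" if "k \<in> K" for k
      proof -
        have "k \<in> ?H'" using that KH' by simp
        moreover have "subspace {x. br x u \<in> W}" by (rule sub_pre_l[OF W])
        moreover have "\<forall>x\<in>insert a H. br x u \<in> W" using u unfolding U0_def by auto
        ultimately show ?thesis using span_induct[of k "insert a H" "\<lambda>x. br x u \<in> W"] by auto
      qed
      then show ?thesis using u unfolding U0_def by auto
    qed
  qed
qed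

lemma FP_nil_aux:
  assumes FPS: "FP S" and s: "s \<in> S"
  shows "subspace W \<Longrightarrow> inv S W \<Longrightarrow> \<exists>n. \<forall>v. (br s ^^ n) v \<in> W"
proof (induction "dimension - dim W" arbitrary: W rule: less_induct)
  case less
  show ?case
  proof (cases "W = UNIV")
    case True then show ?thesis by auto
  next
    case False
    have iS: "inv S UNIV" unfolding inv_def by auto
    have WU: "W \<subset> UNIV" using False by auto
    from FPS[unfolded FP_def, rule_format, OF less.prems(1) subspace_UNIV WU iS less.prems(2)]
    obtain u where u: "u \<notin> W" "\<forall>s\<in>S. br s u \<in> W" by blast
    let ?W' = "span (insert u W)"
    have bW: "br t w \<in> W" if "t \<in> S" "w \<in> ?W'" for t w
    proof -
      have "\<forall>x\<in>insert u W. br t x \<in> W" using u that less.prems unfolding inv_def by auto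
      then show ?thesis using span_induct[of w "insert u W" "\<lambda>x. br t x \<in> W"] sub_pre_r[OF less.prems(1), of t] that
        by auto
    qed
    have "inv S ?W'" using bW span_superset[of "insert u W"] unfolding inv_def by blast
    moreover have "W \<subset> ?W'" using u span_superset[of "insert u W"] by auto
    then have "dim W < dim ?W'" using dim_psubset[of W ?W'] less.prems by simp
    then have "dimension - dim ?W' < dimension - dim W" using dim_subset_UNIV[of ?W'] by linarith
    ultimately obtain n where n: "\<forall>v. (br s ^^ n) v \<in> ?W'" using less.hyps[of ?W'] by auto
    have "\<forall>v. (br s ^^ Suc n) v \<in> W" using bW[OF s] n by simp
    then show ?thesis by blast
  qed
qed

lemma FP_nil: "FP S \<Longrightarrow> nil_on br S"
proof -
  assume FPS: "FP S"
  have "inv S {0}" unfolding inv_def by auto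
  then show ?thesis using FP_nil_aux[OF FPS, of _ "{0}"] unfolding nil_on_def acts_nilp_def by auto
qed

lemma nil_sum:
  assumes I: "lie_subalgebra scale br I" "nil_on br I" and K: "lie_subalgebra scale br K" "nil_on br K"
    and KI: "\<forall>k\<in>K. \<forall>i\<in>I. br k i \<in> I"
  shows "nil_on br {i + k | i k. i \<in> I \<and> k \<in> K}"
proof (rule FP_nil)
  let ?T = "{i + k | i k. i \<in> I \<and> k \<in> K}"
  have I0: "0 \<in> I" and K0: "0 \<in> K" using I K subalg_0 by auto
  have IT: "I \<subseteq> ?T" using K0 by force
  have KT: "K \<subseteq> ?T" using I0 by force
  have Is: "subspace I" using I unfolding lie_subalgebra_def by auto
  show "FP ?T" unfolding FP_def
  proof (intro allI impI)
    fix W U assume W: "subspace W" and U: "subspace U" and WU: "W \<subset> U"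
      and iU: "inv ?T U" and iW: "inv ?T W"
    have iIU: "inv I U" "inv I W" "inv K U" "inv K W" using inv_mono[OF iU IT] inv_mono[OF iW IT] inv_mono[OF iU KT] inv_mono[OF iW KT] by auto
    define U0 where "U0 = {u\<in>U. \<forall>i\<in>I. br i u \<in> W}"
    have U0s: "subspace U0" unfolding U0_def
      by (rule subspaceI) (auto simp: add_r scale_r subspace_0 subspace_add subspace_scale W U)
    obtain u1 where u1: "u1 \<in> U - W" "\<forall>i\<in>I. br i u1 \<in> W"
      using engel[OF I, unfolded FP_def, rule_format, OF W U WU iIU(1,2)] by blast
    have WU0: "W \<subset> U0" using u1 iIU WU unfolding U0_def inv_def by auto
    have "inv K U0" unfolding inv_def
    proof (intro ballI)
      fix k u assume k: "k \<in> K" and u: "u \<in> U0"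
      have "br k u \<in> U" using iIU k u unfolding inv_def U0_def by auto
      moreover have "br i (br k u) \<in> W" if i: "i \<in> I" for i
      proof -
        have "br i k \<in> I" using KI k i anti[of i k] subspace_neg[OF Is] by auto
        then have "br (br i k) u \<in> W" using u unfolding U0_def by auto
        moreover have "br k (br i u) \<in> W" using iIU k i u unfolding U0_def inv_def by auto
        ultimately show ?thesis using jac2 subspace_add[OF W] by metis
      qed
      ultimately show "br k u \<in> U0" unfolding U0_def by auto
    qed
    then obtain u where u: "u \<in> U0 - W" "\<forall>k\<in>K. br k u \<in> W"
      using engel[OF K, unfolded FP_def, rule_format, OF W U0s WU0 \<open>inv K U0\<close> iIU(4)] by blast
    have "\<forall>t\<in>?T. br t u \<in> W" using u subspace_add[OF W] unfolding U0_def by (auto simp: add_l)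
    then show "\<exists>u\<in>U - W. \<forall>s\<in>?T. br s u \<in> W" using u unfolding U0_def by auto
  qed
qed

lemma ideal_subalg: "lie_ideal scale br S J \<Longrightarrow> lie_subalgebra scale br J"
  unfolding lie_ideal_def lie_subalgebra_def by blast

lemma nil_rad_props:
  assumes S: "lie_subalgebra scale br S"
  shows "lie_ideal scale br S (nil_rad scale br S) \<and> nil_on br (nil_rad scale br S)
     \<and> (\<forall>J. lie_ideal scale br S J \<and> nil_on br J \<longrightarrow> J \<subseteq> nil_rad scale br S)"
proof -
  let ?P = "\<lambda>J. lie_ideal scale br S J \<and> nil_on br J"
  have Ss: "subspace S" using S unfolding lie_subalgebra_def by auto
  have "lie_ideal scale br S {0}" unfolding lie_ideal_def using subalg_0[OF S] by simp
  moreover have "nil_on br {0}" unfolding nil_on_def acts_nilp_def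
    by (auto intro: exI[of _ 1])
  ultimately have "?P {0}" by (rule conjI)
  from greatest_dim[of ?P, OF this] obtain J0 where J0: "?P J0" and J0max: "\<forall>Z. ?P Z \<longrightarrow> dim Z \<le> dim J0"
    by blast
  have J0s: "subspace J0" and J0S: "J0 \<subseteq> S" and J0i: "\<forall>x\<in>S. \<forall>y\<in>J0. br x y \<in> J0"
    using J0 unfolding lie_ideal_def by auto
  have all: "J \<subseteq> J0" if PJ: "?P J" for J
  proof -
    let ?T = "{i + k | i k. i \<in> J0 \<and> k \<in> J}"
    have Js: "subspace J" and JS: "J \<subseteq> S" and Ji: "\<forall>x\<in>S. \<forall>y\<in>J. br x y \<in> J"
      using PJ unfolding lie_ideal_def by auto
    have Ts: "subspace ?T" by (rule subspace_sums[OF J0s Js])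
    have TS: "?T \<subseteq> S" using J0S JS subspace_add[OF Ss] by blast
    have Ti: "br x y \<in> ?T" if "x \<in> S" "y \<in> ?T" for x y
    proof -
      obtain i k where y: "y = i + k" "i \<in> J0" "k \<in> J" using \<open>y \<in> ?T\<close> by blast
      have "br x y = br x i + br x k" using y by (simp add: add_r)
      moreover have "br x i \<in> J0" "br x k \<in> J" using J0i Ji that y by auto
      ultimately show ?thesis by blast
    qed
    have "lie_ideal scale br S ?T" unfolding lie_ideal_def using Ts TS Ti by blast
    moreover have "nil_on br ?T"
    proof (rule nil_sum)
      show "lie_subalgebra scale br J0" using ideal_subalg J0 by blast
      show "nil_on br J0" using J0 by blast
      show "lie_subalgebra scale br J" using ideal_subalg PJ by blast
      show "nil_on br J" using PJ by blast
      show "\<forall>k\<in>J. \<forall>i\<in>J0. br k i \<in> J0" using J0i JS by blast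
    qed
    ultimately have "dim ?T \<le> dim J0" using J0max by blast
    moreover have "J0 \<subseteq> ?T" using subspace_0[OF Js] by force
    ultimately have "J0 = ?T" using subspace_dim_equal[OF J0s Ts] by blast
    moreover have "J \<subseteq> ?T" using subspace_0[OF J0s] by force
    ultimately show ?thesis by simp
  qed
  have "nil_rad scale br S = J0" unfolding nil_rad_def
  proof (rule the_equality)
    show "lie_ideal scale br S J0 \<and> nil_on br J0 \<and> (\<forall>J. lie_ideal scale br S J \<and> nil_on br J \<longrightarrow> J \<subseteq> J0)" using J0 all by blast
    fix I assume "lie_ideal scale br S I \<and> nil_on br I \<and> (\<forall>J. lie_ideal scale br S J \<and> nil_on br J \<longrightarrow> J \<subseteq> I)"
    then show "I = J0" using all J0 by blast
  qed
  then show ?thesis using J0 all by simp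
qed

end

locale SLA = LA scale Basis br
  for scale :: "'f::field \<Rightarrow> 'v::ab_group_add \<Rightarrow> 'v" and Basis and br +
  assumes simple: "simple_lie scale br"
    and tri: "\<forall>S. lie_subalgebra scale br S \<and> S \<noteq> UNIV \<longrightarrow> triangulable scale br S"
begin

lemma nonab: "\<exists>x y. br x y \<noteq> 0" using simple unfolding simple_lie_def by blast

lemma ideal_triv: "lie_ideal scale br UNIV I \<Longrightarrow> I = {0} \<or> I = UNIV"
  using simple unfolding simple_lie_def by blast

lemma univ_ne0: "UNIV \<noteq> ({0}::'v set)"
  using nonab by auto

lemma notnil: "\<not> nil_on br UNIV"
proof
  assume n: "nil_on br UNIV"
  have "lie_subalgebra scale br UNIV" unfolding lie_subalgebra_def by simp
  from engel[OF this n] have F: "FP UNIV" .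
  have "{0} \<subset> (UNIV::'v set)" using univ_ne0 by blast
  moreover have "inv UNIV UNIV" "inv UNIV {0}" unfolding inv_def by auto
  ultimately obtain u where u: "u \<noteq> 0" "\<forall>s. br s u = 0"
    using F[unfolded FP_def, rule_format, OF subspace_single_0 subspace_UNIV] by blast
  let ?Z = "{z. \<forall>w. br w z = 0}"
  have "subspace ?Z" by (rule subspaceI) (auto simp: add_r scale_r)
  moreover have "\<forall>x\<in>UNIV. \<forall>y\<in>?Z. br x y \<in> ?Z" by simp
  ultimately have "lie_ideal scale br UNIV ?Z" unfolding lie_ideal_def by blast
  from ideal_triv[OF this] have "?Z = UNIV" using u by auto
  then show False using nonab by auto
qed

lemma nil_ne_UNIV: "nil_on br K \<Longrightarrow> K \<noteq> UNIV"
  using notnil by blast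

lemma max_exists:
  assumes S: "lie_subalgebra scale br S" "S \<noteq> UNIV"
  shows "\<exists>M. maximal_subalgebra scale br M \<and> S \<subseteq> M"
proof -
  let ?P = "\<lambda>M. lie_subalgebra scale br M \<and> M \<noteq> UNIV \<and> S \<subseteq> M"
  have "?P S" using S by blast
  from greatest_dim[of ?P, OF this] obtain M where M: "?P M" and Mmax: "\<forall>Z. ?P Z \<longrightarrow> dim Z \<le> dim M"
    by blast
  have "maximal_subalgebra scale br M" unfolding maximal_subalgebra_def
  proof (intro conjI allI impI)
    show "lie_subalgebra scale br M" "M \<noteq> UNIV" using M by auto
    fix N assume N: "lie_subalgebra scale br N \<and> M \<subseteq> N"
    show "N = M \<or> N = UNIV"
    proof (cases "N = UNIV")
      case False
      then have "?P N" using N M by blast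
      then have "dim N \<le> dim M" using Mmax by blast
      then have "M = N" using subspace_dim_equal[of M N] M N unfolding lie_subalgebra_def by blast
      then show ?thesis by simp
    qed simp
  qed
  then show ?thesis using M by blast
qed

lemma norm_sub:
  assumes K: "lie_subalgebra scale br K"
  shows "lie_subalgebra scale br (normalizer br K) \<and> K \<subseteq> normalizer br K"
proof -
  have Ks: "subspace K" using K unfolding lie_subalgebra_def by auto
  have "subspace (normalizer br K)" unfolding normalizer_def
    by (rule subspaceI) (auto simp: add_l scale_l subspace_0[OF Ks] subspace_add[OF Ks] subspace_scale[OF Ks])
  moreover have "br x y \<in> normalizer br K" if "x \<in> normalizer br K" "y \<in> normalizer br K" for x y
    unfolding normalizer_def
  proof (rule CollectI, rule ballI)
    fix k assume k: "k \<in> K"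
    have "br x (br y k) \<in> K" "br y (br x k) \<in> K" using that k unfolding normalizer_def by auto
    moreover have "br (br x y) k = br x (br y k) - br y (br x k)" using jac2[of x y k] by simp
    ultimately show "br (br x y) k \<in> K" using subspace_diff[OF Ks] by simp
  qed
  moreover have "K \<subseteq> normalizer br K" using K unfolding lie_subalgebra_def normalizer_def by blast
  ultimately show ?thesis unfolding lie_subalgebra_def by blast
qed

lemma norm_proper:
  assumes K: "lie_subalgebra scale br K" "K \<noteq> {0}" "K \<noteq> UNIV"
  shows "normalizer br K \<noteq> UNIV"
proof
  assume "normalizer br K = UNIV"
  then have "lie_ideal scale br UNIV K" using K unfolding lie_ideal_def lie_subalgebra_def normalizer_def by blast
  then show False using ideal_triv K by blast
qed

lemma derived_ideal:
  assumes M: "lie_subalgebra scale br M"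
  shows "lie_ideal scale br M (derived scale br M)"
proof -
  have g: "{br x y | x y. x \<in> M \<and> y \<in> M} \<subseteq> M" using M unfolding lie_subalgebra_def by blast
  have Ms: "subspace M" using M unfolding lie_subalgebra_def by auto
  have sub: "derived scale br M \<subseteq> M" unfolding derived_def using span_minimal[OF g Ms] .
  have "br x y \<in> derived scale br M" if "x \<in> M" "y \<in> derived scale br M" for x y
  proof -
    have "y \<in> M" using sub that by blast
    then show ?thesis unfolding derived_def using that(1) by (intro span_base) blast
  qed
  then show ?thesis unfolding lie_ideal_def using sub unfolding derived_def by auto
qed

lemma derived_sub:
  assumes M: "lie_subalgebra scale br M" "M \<noteq> UNIV"
  shows "derived scale br M \<subseteq> nil_rad scale br M"
proof -
  have "nil_on br (derived scale br M)" using tri M unfolding triangulable_def nil_on_def by blast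
  then show ?thesis using nil_rad_props[OF M(1)] derived_ideal[OF M(1)] by blast
qed

lemma span1_subalg: "lie_subalgebra scale br (span {x})"
proof -
  have "br a b \<in> span {x}" if "a \<in> span {x}" "b \<in> span {x}" for a b
    by (rule br_span[OF _ subspace_span that]) (simp add: alt span_zero)
  then show ?thesis unfolding lie_subalgebra_def by blast
qed

lemma NILM:
  assumes M: "lie_subalgebra scale br M" "M \<noteq> UNIV" and x: "x \<in> M" "acts_nilp br x"
  shows "x \<in> nil_rad scale br M"
proof -
  let ?R = "nil_rad scale br M"
  note R = nil_rad_props[OF M(1)]
  have Rs: "subspace ?R" and RM: "?R \<subseteq> M" and Ri: "\<forall>a\<in>M. \<forall>b\<in>?R. br a b \<in> ?R"
    using R unfolding lie_ideal_def by auto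
  have Ms: "subspace M" using M unfolding lie_subalgebra_def by auto
  have xM: "span {x} \<subseteq> M" using span_minimal[of "{x}" M] x Ms by blast
  let ?J = "{i + k | i k. i \<in> ?R \<and> k \<in> span {x}}"
  have Js: "subspace ?J" by (rule subspace_sums[OF Rs subspace_span])
  have JM: "?J \<subseteq> M" using RM xM subspace_add[OF Ms] by blast
  have "br a b \<in> ?J" if "a \<in> M" "b \<in> ?J" for a b
  proof -
    have "br a b \<in> derived scale br M" unfolding derived_def using that JM by (intro span_base) blast
    then have "br a b \<in> ?R" using derived_sub[OF M] by blast
    then show ?thesis using span_zero[of "{x}"] by force
  qed
  then have "lie_ideal scale br M ?J" unfolding lie_ideal_def using Js JM by blast
  moreover have "nil_on br ?J"
  proof (rule nil_sum)
    show "lie_subalgebra scale br ?R" using ideal_subalg R by blast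
    show "nil_on br ?R" using R by blast
    show "lie_subalgebra scale br (span {x})" by (rule span1_subalg)
    show "nil_on br (span {x})" unfolding nil_on_def span_singleton using acts_nilp_scale x(2) by auto
    show "\<forall>k\<in>span {x}. \<forall>i\<in>?R. br k i \<in> ?R" using Ri xM by blast
  qed
  ultimately have "?J \<subseteq> ?R" using R by blast
  moreover have "x \<in> ?J" using subspace_0[OF Rs] span_base[of x "{x}"] by force
  ultimately show ?thesis by blast
qed

lemma key1:
  assumes M: "maximal_subalgebra scale br M" and R0: "nil_rad scale br M \<noteq> {0}"
  shows "normalizer br (nil_rad scale br M) = M \<and> maximal_nil_subalgebra scale br (nil_rad scale br M)"
proof -
  let ?R = "nil_rad scale br M"
  have Msub: "lie_subalgebra scale br M" and MU: "M \<noteq> UNIV"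
    and Mmax: "\<And>N. lie_subalgebra scale br N \<Longrightarrow> M \<subseteq> N \<Longrightarrow> N = M \<or> N = UNIV"
    using M unfolding maximal_subalgebra_def by auto
  note R = nil_rad_props[OF Msub]
  have Rsub: "lie_subalgebra scale br ?R" using ideal_subalg R by blast
  have RM: "?R \<subseteq> M" and Ri: "\<forall>a\<in>M. \<forall>b\<in>?R. br a b \<in> ?R" using R unfolding lie_ideal_def by auto
  have Rnil: "nil_on br ?R" using R by blast
  have RU: "?R \<noteq> UNIV" using RM MU by blast
  note NS = norm_sub[OF Rsub]
  have MN: "M \<subseteq> normalizer br ?R" using Ri unfolding normalizer_def by blast
  have NU: "normalizer br ?R \<noteq> UNIV" using norm_proper[OF Rsub R0 RU] .
  have NM: "normalizer br ?R = M" using Mmax[OF conjunct1[OF NS] MN] NU by blast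
  have "maximal_nil_subalgebra scale br ?R" unfolding maximal_nil_subalgebra_def
  proof (intro conjI allI impI)
    show "lie_subalgebra scale br ?R" "nil_on br ?R" using Rsub Rnil by auto
    fix N assume N: "lie_subalgebra scale br N \<and> nil_on br N \<and> ?R \<subseteq> N"
    show "N = ?R"
    proof (rule ccontr)
      assume "N \<noteq> ?R"
      then have RN: "?R \<subset> N" using N by blast
      have Rs: "subspace ?R" and Ns: "subspace N" using Rsub N unfolding lie_subalgebra_def by auto
      have "inv ?R N" "inv ?R ?R" using N Rsub RN unfolding inv_def lie_subalgebra_def by blast+
      from engel[OF Rsub Rnil, unfolded FP_def, rule_format, OF Rs Ns RN this]
      obtain a where a: "a \<in> N" "a \<notin> ?R" "\<forall>r\<in>?R. br r a \<in> ?R" by blast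
      have "\<forall>r\<in>?R. br a r \<in> ?R" using a(3) anti subspace_neg[OF Rs] by metis
      then have "a \<in> M" using NM unfolding normalizer_def by blast
      moreover have "acts_nilp br a" using N a unfolding nil_on_def by blast
      ultimately have "a \<in> ?R" using NILM[OF Msub MU] by blast
      then show False using a by blast
    qed
  qed
  then show ?thesis using NM by blast
qed

lemma part1:
  assumes M: "maximal_subalgebra scale br M"
  shows "(abelian br M \<and> (\<forall>x\<in>M. x \<noteq> 0 \<longrightarrow> \<not> acts_nilp br x))
      \<or> (nil_rad scale br M \<noteq> {0} \<and> maximal_nil_subalgebra scale br (nil_rad scale br M))"
proof (cases "nil_rad scale br M = {0}")
  case True
  have Msub: "lie_subalgebra scale br M" and MU: "M \<noteq> UNIV"
    using M unfolding maximal_subalgebra_def by auto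
  have "br x y = 0" if "x \<in> M" "y \<in> M" for x y
  proof -
    have "br x y \<in> derived scale br M" unfolding derived_def using that by (intro span_base) blast
    then show ?thesis using derived_sub[OF Msub MU] True by blast
  qed
  then have "abelian br M" unfolding abelian_def by blast
  moreover have "\<forall>x\<in>M. x \<noteq> 0 \<longrightarrow> \<not> acts_nilp br x" using NILM[OF Msub MU] True by blast
  ultimately show ?thesis by blast
next
  case False
  then show ?thesis using key1[OF M] by blast
qed

lemma part2:
  assumes K: "maximal_nil_subalgebra scale br K" "K \<noteq> {0}"
  shows "maximal_subalgebra scale br (normalizer br K)"
proof -
  have Ksub: "lie_subalgebra scale br K" and Knil: "nil_on br K"
    and Kmax: "\<And>N. lie_subalgebra scale br N \<Longrightarrow> nil_on br N \<Longrightarrow> K \<subseteq> N \<Longrightarrow> N = K"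
    using K unfolding maximal_nil_subalgebra_def by auto
  have KU: "K \<noteq> UNIV" using nil_ne_UNIV[OF Knil] .
  note NS = norm_sub[OF Ksub]
  have NU: "normalizer br K \<noteq> UNIV" using norm_proper[OF Ksub K(2) KU] .
  obtain M where M: "maximal_subalgebra scale br M" "normalizer br K \<subseteq> M"
    using max_exists[OF conjunct1[OF NS] NU] by blast
  have Msub: "lie_subalgebra scale br M" and MU: "M \<noteq> UNIV" using M unfolding maximal_subalgebra_def by auto
  let ?R = "nil_rad scale br M"
  note R = nil_rad_props[OF Msub]
  have KR: "K \<subseteq> ?R"
  proof
    fix k assume "k \<in> K"
    then show "k \<in> ?R" using NILM[OF Msub MU] NS M(2) Knil unfolding nil_on_def by blast
  qed
  have "?R = K" using Kmax[OF ideal_subalg _ KR] R by blast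
  then have "?R \<noteq> {0}" using K(2) by simp
  from key1[OF M(1) this] \<open>?R = K\<close> have "normalizer br K = M" by simp
  then show ?thesis using M by simp
qed

lemma inter_subalg: "lie_subalgebra scale br A \<Longrightarrow> lie_subalgebra scale br B \<Longrightarrow> lie_subalgebra scale br (A \<inter> B)"
  unfolding lie_subalgebra_def by (auto intro: subspace_inter)

lemma part3a:
  assumes M1: "maximal_subalgebra scale br M1" and M2: "maximal_subalgebra scale br M2" and ne: "M1 \<noteq> M2"
  shows "\<forall>x\<in>M1 \<inter> M2. x \<noteq> 0 \<longrightarrow> \<not> acts_nilp br x"
proof (rule ccontr)
  define Bad where "Bad p \<longleftrightarrow> maximal_subalgebra scale br (fst p) \<and> maximal_subalgebra scale br (snd p)
      \<and> fst p \<noteq> snd p \<and> (\<exists>x\<in>fst p \<inter> snd p. x \<noteq> 0 \<and> acts_nilp br x)" for p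
  define f where "f p = dim (nil_rad scale br (fst p) \<inter> nil_rad scale br (snd p))" for p
  assume "\<not> ?thesis"
  then have "Bad (M1, M2)" using M1 M2 ne unfolding Bad_def by auto
  from greatest_f[of Bad, OF this, of f dimension] dim_subset_UNIV
  obtain p where p: "Bad p" and pmax: "\<forall>q. Bad q \<longrightarrow> f q \<le> f p" unfolding f_def by blast
  obtain A B where pAB: "p = (A, B)" by (cases p)
  have A: "maximal_subalgebra scale br A" and B: "maximal_subalgebra scale br B" and AB: "A \<noteq> B"
    using p pAB unfolding Bad_def by auto
  obtain x where x: "x \<in> A" "x \<in> B" "x \<noteq> 0" "acts_nilp br x" using p pAB unfolding Bad_def by auto
  have maxI: "lie_subalgebra scale br X" "X \<noteq> UNIV" if "maximal_subalgebra scale br X" for X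
    using that unfolding maximal_subalgebra_def by auto
  let ?RA = "nil_rad scale br A" and ?RB = "nil_rad scale br B"
  let ?I = "?RA \<inter> ?RB"
  have xRA: "x \<in> ?RA" using NILM[OF maxI[OF A]] x by blast
  have xRB: "x \<in> ?RB" using NILM[OF maxI[OF B]] x by blast
  have RAn: "?RA \<noteq> {0}" and RBn: "?RB \<noteq> {0}" using xRA xRB x by auto
  note kA = key1[OF A RAn] and kB = key1[OF B RBn]
  have props: "lie_subalgebra scale br (nil_rad scale br X) \<and> nil_on br (nil_rad scale br X)
      \<and> nil_rad scale br X \<subseteq> X" if "maximal_subalgebra scale br X" for X
  proof -
    note R = nil_rad_props[OF maxI(1)[OF that]]
    then have li: "lie_ideal scale br X (nil_rad scale br X)" by blast
    have "lie_subalgebra scale br (nil_rad scale br X)" by (rule ideal_subalg[OF li])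
    moreover have "nil_rad scale br X \<subseteq> X" using li unfolding lie_ideal_def by blast
    ultimately show ?thesis using R by blast
  qed
  have RAs: "lie_subalgebra scale br ?RA" "nil_on br ?RA" using props[OF A] by auto
  have RBs: "lie_subalgebra scale br ?RB" "nil_on br ?RB" using props[OF B] by auto
  have Isub: "lie_subalgebra scale br ?I" using inter_subalg RAs RBs by blast
  have Inil: "nil_on br ?I" using RAs unfolding nil_on_def by blast
  have Is: "subspace ?I" using Isub unfolding lie_subalgebra_def by blast
  have I0: "?I \<noteq> {0}" using xRA xRB x by blast
  have IU: "?I \<noteq> UNIV" using nil_ne_UNIV[OF Inil] .
  have IA: "?I \<subset> ?RA"
  proof -
    have "?I \<noteq> ?RA"
    proof
      assume "?I = ?RA"
      then have "?RA \<subseteq> ?RB" by blast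
      then have "?RB = ?RA" using kA RBs unfolding maximal_nil_subalgebra_def by blast
      then show False using kA kB AB by simp
    qed
    then show ?thesis by blast
  qed
  have IB: "?I \<subset> ?RB"
  proof -
    have "?I \<noteq> ?RB"
    proof
      assume "?I = ?RB"
      then have "?RB \<subseteq> ?RA" by blast
      then have "?RA = ?RB" using kB RAs unfolding maximal_nil_subalgebra_def by blast
      then show False using kA kB AB by simp
    qed
    then show ?thesis by blast
  qed
  note NS = norm_sub[OF Isub]
  have NU: "normalizer br ?I \<noteq> UNIV" using norm_proper[OF Isub I0 IU] .
  obtain M0 where M0: "maximal_subalgebra scale br M0" "normalizer br ?I \<subseteq> M0"
    using max_exists[OF conjunct1[OF NS] NU] by blast
  let ?R0 = "nil_rad scale br M0"
  have IR0: "?I \<subseteq> ?R0"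
  proof
    fix i assume "i \<in> ?I"
    then show "i \<in> ?R0" using NILM[OF maxI[OF M0(1)]] NS M0(2) Inil unfolding nil_on_def by blast
  qed
  have R0s: "subspace ?R0" using props[OF M0(1)] unfolding lie_subalgebra_def by blast
  have fle: "f q \<le> dim ?I" if "Bad q" for q using pmax that pAB unfolding f_def by auto
  have xM0: "x \<in> M0" using IR0 xRA xRB props[OF M0(1)] by blast
  have claim: "Mx = M0" if Mx: "maximal_subalgebra scale br Mx" and IRx: "?I \<subset> nil_rad scale br Mx" for Mx
  proof (rule ccontr)
    assume ne: "Mx \<noteq> M0"
    let ?Rx = "nil_rad scale br Mx"
    have Rxs: "lie_subalgebra scale br ?Rx" "nil_on br ?Rx" "?Rx \<subseteq> Mx" using props[OF Mx] by auto
    have xMx: "x \<in> Mx" using xRA xRB IRx Rxs(3) by blast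
    have "Bad (M0, Mx)" unfolding Bad_def using M0(1) Mx ne xMx xM0 x(3,4) by auto
    then have fI: "f (M0, Mx) \<le> dim ?I" by (rule fle)
    have Rxsp: "subspace ?Rx" using Rxs unfolding lie_subalgebra_def by blast
    have "inv ?I ?Rx" "inv ?I ?I" using IRx Rxs(1) Isub unfolding inv_def lie_subalgebra_def by blast+
    from engel[OF Isub Inil, unfolded FP_def, rule_format, OF Is Rxsp IRx this]
    obtain a where a: "a \<in> ?Rx" "a \<notin> ?I" "\<forall>r\<in>?I. br r a \<in> ?I" by blast
    have "\<forall>r\<in>?I. br a r \<in> ?I" using a(3) anti subspace_neg[OF Is] by metis
    then have "a \<in> M0" using M0(2) unfolding normalizer_def by blast
    moreover have "acts_nilp br a" using Rxs a unfolding nil_on_def by blast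
    ultimately have aR0: "a \<in> ?R0" using NILM[OF maxI[OF M0(1)]] by blast
    have "?I \<subset> ?R0 \<inter> ?Rx" using IR0 IRx a aR0 by blast
    then have "dim ?I < dim (?R0 \<inter> ?Rx)"
      using dim_psubset[of ?I "?R0 \<inter> ?Rx"] Is subspace_inter[OF R0s Rxsp] by simp
    then show False using fI unfolding f_def by simp
  qed
  have "A = M0" by (rule claim[OF A IA])
  moreover have "B = M0" by (rule claim[OF B IB])
  ultimately show False using AB by simp
qed

lemma part3b:
  assumes M1: "maximal_subalgebra scale br M1" and M2: "maximal_subalgebra scale br M2" and ne: "M1 \<noteq> M2"
  shows "abelian br (M1 \<inter> M2)"
  unfolding abelian_def
proof (intro ballI)
  fix x y assume x: "x \<in> M1 \<inter> M2" and y: "y \<in> M1 \<inter> M2"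
  have M1s: "lie_subalgebra scale br M1" "M1 \<noteq> UNIV" and M2s: "lie_subalgebra scale br M2"
    using M1 M2 unfolding maximal_subalgebra_def by auto
  have in12: "br x y \<in> M1 \<inter> M2" using x y M1s M2s unfolding lie_subalgebra_def by blast
  have "br x y \<in> derived scale br M1" unfolding derived_def using x y by (intro span_base) blast
  then have "br x y \<in> nil_rad scale br M1" using derived_sub[OF M1s(1,2)] by blast
  then have "acts_nilp br (br x y)" using nil_rad_props[OF M1s(1)] unfolding nil_on_def by blast
  then show "br x y = 0" using part3a[OF M1 M2 ne] in12 by blast
qed

lemma gen_props:
  "lie_subalgebra scale br (gen_subalgebra scale br X) \<and> X \<subseteq> gen_subalgebra scale br X
   \<and> (\<forall>S. lie_subalgebra scale br S \<and> X \<subseteq> S \<longrightarrow> gen_subalgebra scale br X \<subseteq> S)"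
proof -
  let ?F = "{S. lie_subalgebra scale br S \<and> X \<subseteq> S}"
  have "subspace (\<Inter>?F)" by (rule subspace_Inter) (auto simp: lie_subalgebra_def)
  moreover have "\<forall>x\<in>\<Inter>?F. \<forall>y\<in>\<Inter>?F. br x y \<in> \<Inter>?F" unfolding lie_subalgebra_def by blast
  ultimately have "lie_subalgebra scale br (\<Inter>?F)" unfolding lie_subalgebra_def by blast
  then show ?thesis unfolding gen_subalgebra_def by blast
qed

lemma span1_ne: "span {x} \<noteq> UNIV"
proof
  assume U: "span {x} = UNIV"
  have "br a b \<in> {0}" for a b
    by (rule br_span[of "{x}" "{x}"]) (auto simp: alt U)
  then show False using nonab by auto
qed

lemma gen2:
  assumes M: "maximal_subalgebra scale br M" and x: "x \<in> M" and y: "y \<notin> M"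
    and uniq: "\<And>M'. maximal_subalgebra scale br M' \<Longrightarrow> x \<in> M' \<Longrightarrow> M' = M"
  shows "gen_subalgebra scale br {x, y} = UNIV"
proof (rule ccontr)
  assume ne: "gen_subalgebra scale br {x, y} \<noteq> UNIV"
  note G = gen_props[of "{x,y}"]
  obtain M' where M': "maximal_subalgebra scale br M'" "gen_subalgebra scale br {x, y} \<subseteq> M'"
    using max_exists[OF conjunct1[OF G] ne] by blast
  have "x \<in> M'" "y \<in> M'" using M'(2) G by auto
  then show False using uniq[OF M'(1)] y by blast
qed

lemma part4: "two_generated scale br"
proof -
  have sp: "lie_subalgebra scale br (span {x})" "span {x} \<noteq> UNIV" for x
    using span1_subalg span1_ne by auto
  show ?thesis
  proof (cases "\<exists>x. x \<noteq> 0 \<and> acts_nilp br x")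
    case True
    then obtain x where x: "x \<noteq> 0" "acts_nilp br x" by blast
    obtain M where M: "maximal_subalgebra scale br M" "span {x} \<subseteq> M" using max_exists[OF sp] by blast
    have xM: "x \<in> M" using M(2) span_base[of x "{x}"] by blast
    obtain y where y: "y \<notin> M" using M(1) unfolding maximal_subalgebra_def by blast
    have "gen_subalgebra scale br {x, y} = UNIV"
    proof (rule gen2[OF M(1) xM y])
      fix M' assume M': "maximal_subalgebra scale br M'" "x \<in> M'"
      show "M' = M"
      proof (rule ccontr)
        assume "M' \<noteq> M"
        then show False using part3a[OF M(1) M'(1)] xM M'(2) x by blast
      qed
    qed
    then show ?thesis unfolding two_generated_def by blast
  next
    case False
    then have nonil: "\<And>z. acts_nilp br z \<Longrightarrow> z = 0" by blast
    have ab: "abelian br N" if "maximal_subalgebra scale br N" for N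
    proof -
      have "\<not> (nil_rad scale br N \<noteq> {0} \<and> maximal_nil_subalgebra scale br (nil_rad scale br N))"
      proof
        assume a: "nil_rad scale br N \<noteq> {0} \<and> maximal_nil_subalgebra scale br (nil_rad scale br N)"
        then have nn: "nil_on br (nil_rad scale br N)" unfolding maximal_nil_subalgebra_def by blast
        have ss: "subspace (nil_rad scale br N)" using a unfolding maximal_nil_subalgebra_def lie_subalgebra_def by blast
        then have "nil_rad scale br N \<subseteq> {0}" using nn nonil unfolding nil_on_def by blast
        then show False using a subspace_0[OF ss] by blast
      qed
      then show ?thesis using part1[OF that] by blast
    qed
    obtain x :: 'v where x: "x \<noteq> 0" using univ_ne0 by blast
    obtain M where M: "maximal_subalgebra scale br M" "span {x} \<subseteq> M" using max_exists[OF sp] by blast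
    have xM: "x \<in> M" using M(2) span_base[of x "{x}"] by blast
    obtain y where y: "y \<notin> M" using M(1) unfolding maximal_subalgebra_def by blast
    have "gen_subalgebra scale br {x, y} = UNIV"
    proof (rule gen2[OF M(1) xM y])
      fix M' assume M': "maximal_subalgebra scale br M'" "x \<in> M'"
      show "M' = M"
      proof (rule ccontr)
        assume ne: "M' \<noteq> M"
        let ?C = "{z. br x z = 0}"
        have Cs: "subspace ?C" using sub_pre_r[OF subspace_single_0, of x] by simp
        have "br a b \<in> ?C" if "a \<in> ?C" "b \<in> ?C" for a b
          using that jac2[of x a b] by simp
        then have Csub: "lie_subalgebra scale br ?C" using Cs unfolding lie_subalgebra_def by blast
        have MC: "M \<subseteq> ?C" using ab[OF M(1)] xM unfolding abelian_def by blast
        have M'C: "M' \<subseteq> ?C" using ab[OF M'(1)] M'(2) unfolding abelian_def by blast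
        have "\<not> M' \<subseteq> M"
        proof
          assume "M' \<subseteq> M"
          then have "M = M' \<or> M = UNIV" using M'(1) M(1) unfolding maximal_subalgebra_def by blast
          then show False using ne M(1) unfolding maximal_subalgebra_def by blast
        qed
        then have "?C \<noteq> M" using M'C by blast
        then have CU: "?C = UNIV" using M(1) Csub MC unfolding maximal_subalgebra_def by blast
        have "lie_ideal scale br UNIV (span {x})"
          unfolding lie_ideal_def
        proof (intro conjI ballI)
          fix w z assume "z \<in> span {x}"
          then obtain c where "z = scale c x" unfolding span_singleton by blast
          moreover have "br w x = 0" using CU anti[of w x] by auto
          ultimately show "br w z \<in> span {x}" by (simp add: scale_r span_zero)
        qed auto
        from ideal_triv[OF this] show False
          using x span1_ne[of x] span_base[of x "{x}"] by auto
      qed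
    qed
    then show ?thesis unfolding two_generated_def by blast
  qed
qed

end

theorem theorem4p4:
  fixes scale :: "'f::field \<Rightarrow> 'v::ab_group_add \<Rightarrow> 'v"
    and br :: "'v \<Rightarrow> 'v \<Rightarrow> 'v"
  assumes "lie_algebra scale br"
    and "fin_dim scale"
    and "simple_lie scale br"
    and "\<forall>S. lie_subalgebra scale br S \<and> S \<noteq> UNIV \<longrightarrow> triangulable scale br S"
  shows "(\<forall>M. maximal_subalgebra scale br M \<longrightarrow>
            (abelian br M \<and> (\<forall>x\<in>M. x \<noteq> 0 \<longrightarrow> \<not> acts_nilp br x))
            \<or> (nil_rad scale br M \<noteq> {0} \<and> maximal_nil_subalgebra scale br (nil_rad scale br M)))
       \<and> (\<forall>K. maximal_nil_subalgebra scale br K \<and> K \<noteq> {0} \<longrightarrow>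
            maximal_subalgebra scale br (normalizer br K))
       \<and> (\<forall>M1 M2. maximal_subalgebra scale br M1 \<and> maximal_subalgebra scale br M2 \<and> M1 \<noteq> M2 \<longrightarrow>
            (\<forall>x\<in>M1 \<inter> M2. x \<noteq> 0 \<longrightarrow> \<not> acts_nilp br x) \<and> abelian br (M1 \<inter> M2))
       \<and> two_generated scale br"
proof -
  have vs: "vector_space scale" using assms(1) unfolding lie_algebra_def by blast
  interpret vector_space scale by (rule vs)
  have "\<exists>B. finite B \<and> span B = UNIV" using assms(2) by (simp add: fin_dim_def)
  then obtain B0 where B0: "finite B0" "span B0 = UNIV" by (elim exE conjE)
  obtain B where B: "B \<subseteq> UNIV" "independent B" "UNIV \<subseteq> span B" "card B = dim UNIV" by (rule basis_exists)
  have fB: "finite B" using independent_span_bound[OF B0(1) B(2)] B0(2) by blast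
  interpret SLA scale B br
  proof (unfold_locales)
    show "finite B" by (rule fB)
    show "independent B" by (rule B(2))
    show "span B = UNIV" using B(3) by blast
  qed (use assms in \<open>auto simp: lie_algebra_def\<close>)
  show ?thesis
  proof (intro conjI allI impI)
    fix M assume "maximal_subalgebra scale br M"
    then show "(abelian br M \<and> (\<forall>x\<in>M. x \<noteq> 0 \<longrightarrow> \<not> acts_nilp br x))
            \<or> (nil_rad scale br M \<noteq> {0} \<and> maximal_nil_subalgebra scale br (nil_rad scale br M))"
      by (rule part1)
  next
    fix K assume "maximal_nil_subalgebra scale br K \<and> K \<noteq> {0}"
    then have k1: "maximal_nil_subalgebra scale br K" and k2: "K \<noteq> {0}" by auto
    show "maximal_subalgebra scale br (normalizer br K)" by (rule part2[OF k1 k2])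
  next
    fix M1 M2 assume a: "maximal_subalgebra scale br M1 \<and> maximal_subalgebra scale br M2 \<and> M1 \<noteq> M2"
    then have a1: "maximal_subalgebra scale br M1" and a2: "maximal_subalgebra scale br M2" and a3: "M1 \<noteq> M2" by auto
    show "\<forall>x\<in>M1 \<inter> M2. x \<noteq> 0 \<longrightarrow> \<not> acts_nilp br x" by (rule part3a[OF a1 a2 a3])
    show "abelian br (M1 \<inter> M2)" by (rule part3b[OF a1 a2 a3])
  next
    show "two_generated scale br" by (rule part4)
  qed
qed

end
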